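(* Let $N,k\in\mathbb N$, $\delta\in[0,\tfrac12)$, $\mathcal Q\subseteq\mathcal S(N)$ a set of $N$-dimensional quantum states and $\mathcal Z:\mathcal Q\to\mathcal P(\mathcal T)$ a learning problem. Let $\mathcal Z(\mathcal Q)=\{\mathcal Z(\rho):\rho\in\mathcal Q\}$ and assume that any two distinct sets $\mathcal T_i\ne\mathcal T_j$ in $\mathcal Z(\mathcal Q)$ satisfy $\mathcal T_i\cap\mathcal T_j=\varnothing$. If there is a quantum algorithm that, with probability $1-\delta$, learns $\mathcal Z$ from $k$ copies of the unknown state, then for every $\tau<\tfrac12-\delta$ there exists a statistical algorithm that learns $\mathcal Z$ from $q=\lceil\log|\mathcal Z(\mathcal Q)|\rceil$ queries to $\mathtt{QStat}^{(k)}_\tau$. In particular, setting $\tau=\tfrac1{10}$, if learning $\mathcal Z$ requires at least $q>\lceil\log|\mathcal Z(\mathcal Q)|\rceil$ queries to $\mathtt{QStat}^{(k)}_\tau$, then $\mathcal Z$ cannot be solved with probability $1-\delta\ge\tfrac23$ given $k$ copies from entangled measurements.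
   Context: $\mathcal S(N)$ is the set of $N$-dimensional density matrices. The learning problem: given access to unknown $\rho\in\mathcal Q$, output some $t\in\mathcal Z(\rho)$. A quantum algorithm learning from $k$ copies performs a (possibly entangled) measurement on $\rho^{\otimes k}$ and outputs an element of $\mathcal Z(\rho)$ with probability at least $1-\delta$. The $k$-copy quantum statistical query oracle $\mathtt{QStat}^{(k)}_\tau(\rho)$, queried with a Hermitian $O$ on $(\mathbb C^N)^{\otimes k}$ with $\|O\|_{\mathrm{op}}\le1$, returns some $v$ with $|v-\mathrm{tr}[\rho^{\otimes k}O]|\le\tau$. $\log$ is base 2. *)

theory Defs
  imports Complex_Main
begin

text \<open>Matrices on C^N are functions nat => nat => complex (entries outside
  {0..<N} are irrelevant / zero). Operators on the k-fold tensor power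
  (C^N)^{\<otimes>k} are indexed by lists of length k with entries < N.\<close>

type_synonym cmat = "nat \<Rightarrow> nat \<Rightarrow> complex"
type_synonym kop = "nat list \<Rightarrow> nat list \<Rightarrow> complex"

definition tidx :: "nat \<Rightarrow> nat \<Rightarrow> nat list set" where
  "tidx N k = {xs. length xs = k \<and> set xs \<subseteq> {..<N}}"

definition hermitian_on :: "'i set \<Rightarrow> ('i \<Rightarrow> 'i \<Rightarrow> complex) \<Rightarrow> bool" where
  "hermitian_on I A \<longleftrightarrow> (\<forall>i\<in>I. \<forall>j\<in>I. A i j = cnj (A j i))"

definition psd_on :: "'i set \<Rightarrow> ('i \<Rightarrow> 'i \<Rightarrow> complex) \<Rightarrow> bool" where
  "psd_on I A \<longleftrightarrow> hermitian_on I A \<and>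
     (\<forall>v :: 'i \<Rightarrow> complex. 0 \<le> Re (\<Sum>i\<in>I. \<Sum>j\<in>I. cnj (v i) * A i j * v j))"

definition opnorm_le1_on :: "'i set \<Rightarrow> ('i \<Rightarrow> 'i \<Rightarrow> complex) \<Rightarrow> bool" where
  "opnorm_le1_on I A \<longleftrightarrow> (\<forall>v :: 'i \<Rightarrow> complex.
     (\<Sum>i\<in>I. (cmod (\<Sum>j\<in>I. A i j * v j))\<^sup>2) \<le> (\<Sum>i\<in>I. (cmod (v i))\<^sup>2))"

definition density_states :: "nat \<Rightarrow> cmat set" where
  "density_states N = {\<rho>. psd_on {..<N} \<rho> \<and> (\<Sum>i<N. \<rho> i i) = 1 \<and>
      (\<forall>i j. N \<le> i \<or> N \<le> j \<longrightarrow> \<rho> i j = 0)}"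

definition tensor_pow :: "cmat \<Rightarrow> nat \<Rightarrow> kop" where
  "tensor_pow \<rho> k = (\<lambda>xs ys. \<Prod>l<k. \<rho> (xs ! l) (ys ! l))"

definition qtrace :: "nat \<Rightarrow> nat \<Rightarrow> cmat \<Rightarrow> kop \<Rightarrow> complex" where
  "qtrace N k \<rho> Ob = (\<Sum>xs\<in>tidx N k. \<Sum>ys\<in>tidx N k. tensor_pow \<rho> k xs ys * Ob ys xs)"

definition qstat_obs :: "nat \<Rightarrow> nat \<Rightarrow> kop \<Rightarrow> bool" where
  "qstat_obs N k Ob \<longleftrightarrow> hermitian_on (tidx N k) Ob \<and> opnorm_le1_on (tidx N k) Ob"

text \<open>A quantum algorithm learning Z from k copies with success probability
  at least 1 - delta: a (finite-outcome) POVM {M_t} on (C^N)^{\<otimes>k}, whose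
  outcome t is output.\<close>
definition quantum_learns ::
  "nat \<Rightarrow> nat \<Rightarrow> real \<Rightarrow> cmat set \<Rightarrow> (cmat \<Rightarrow> 't set) \<Rightarrow> bool" where
  "quantum_learns N k \<delta> Q Z \<longleftrightarrow>
     (\<exists>(S :: 't set) (M :: 't \<Rightarrow> kop).
        finite S \<and> (\<forall>t\<in>S. psd_on (tidx N k) (M t)) \<and>
        (\<forall>xs\<in>tidx N k. \<forall>ys\<in>tidx N k. (\<Sum>t\<in>S. M t xs ys) = (if xs = ys then 1 else 0)) \<and>
        (\<forall>\<rho>\<in>Q. (\<Sum>t\<in>S \<inter> Z \<rho>. Re (qtrace N k \<rho> (M t))) \<ge> 1 - \<delta>))"

text \<open>Deterministic adaptive statistical algorithms: either output a value,
  or ask a query Ob and continue depending on the answer.\<close>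
datatype 't sq_alg = Output 't | Ask kop "real \<Rightarrow> 't sq_alg"

primrec sq_ok :: "nat \<Rightarrow> nat \<Rightarrow> real \<Rightarrow> cmat \<Rightarrow> 't set \<Rightarrow> 't sq_alg \<Rightarrow> nat \<Rightarrow> bool" where
  "sq_ok N k \<tau> \<rho> T (Output t) n = (t \<in> T)"
| "sq_ok N k \<tau> \<rho> T (Ask Ob f) n = (0 < n \<and> qstat_obs N k Ob \<and>
     (\<forall>v::real. cmod (complex_of_real v - qtrace N k \<rho> Ob) \<le> \<tau> \<longrightarrow>
        sq_ok N k \<tau> \<rho> T (f v) (n - 1)))"

definition sq_learns ::
  "nat \<Rightarrow> nat \<Rightarrow> real \<Rightarrow> cmat set \<Rightarrow> (cmat \<Rightarrow> 't set) \<Rightarrow> nat \<Rightarrow> bool" where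
  "sq_learns N k \<tau> Q Z q \<longleftrightarrow> (\<exists>A :: 't sq_alg. \<forall>\<rho>\<in>Q. sq_ok N k \<tau> \<rho> (Z \<rho>) A q)"

end

theory Submission
  imports Defs
begin

definition qf :: "'i set \<Rightarrow> ('i \<Rightarrow> 'i \<Rightarrow> complex) \<Rightarrow> ('i \<Rightarrow> complex) \<Rightarrow> ('i \<Rightarrow> complex) \<Rightarrow> complex" where
  "qf I A u v = (\<Sum>i\<in>I. \<Sum>j\<in>I. cnj (u i) * A i j * v j)"

lemma qf_herm:
  assumes "hermitian_on I A"
  shows "cnj (qf I A u v) = qf I A v u"
proof -
  have "cnj (qf I A u v) = (\<Sum>i\<in>I. \<Sum>j\<in>I. u i * cnj (A i j) * cnj (v j))"
    unfolding qf_def by (simp add: cnj_sum)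
  also have "\<dots> = (\<Sum>i\<in>I. \<Sum>j\<in>I. u i * A j i * cnj (v j))"
    using assms unfolding hermitian_on_def
    by (intro sum.cong refl) (metis complex_cnj_cnj)
  also have "\<dots> = qf I A v u" unfolding qf_def
    by (subst sum.swap) (simp add: mult.commute mult.left_commute)
  finally show ?thesis .
qed

lemma qf_real:
  assumes "hermitian_on I A"
  shows "qf I A u u = complex_of_real (Re (qf I A u u))"
  using qf_herm[OF assms, of u u] by (metis Reals_cnj_iff complex_is_Real_iff of_real_Re)

lemma qf_expand:
  "qf I A (\<lambda>i. u i + \<alpha> * v i) (\<lambda>i. u i + \<alpha> * v i) =
    qf I A u u + \<alpha> * qf I A u v + cnj \<alpha> * qf I A v u + cnj \<alpha> * \<alpha> * qf I A v v"
  unfolding qf_def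
  by (simp add: algebra_simps sum.distrib sum_distrib_left)

lemma psd_qf: "psd_on I A \<Longrightarrow> 0 \<le> Re (qf I A v v)"
  unfolding psd_on_def qf_def by blast

lemma cs_psd:
  assumes "psd_on I A"
  shows "(cmod (qf I A u v))\<^sup>2 \<le> Re (qf I A u u) * Re (qf I A v v)"
proof -
  have H: "hermitian_on I A" using assms psd_on_def by blast
  define a where "a = Re (qf I A u u)"
  define b where "b = Re (qf I A v v)"
  define c where "c = qf I A u v"
  have qa: "qf I A u u = of_real a" using qf_real[OF H] a_def by simp
  have qb: "qf I A v v = of_real b" using qf_real[OF H] b_def by simp
  have qvu: "qf I A v u = cnj c" using qf_herm[OF H] c_def by metis
  have b0: "0 \<le> b" using psd_qf[OF assms] b_def by simp
  have key: "0 \<le> a - 2 * s * (cmod c)\<^sup>2 + s\<^sup>2 * (cmod c)\<^sup>2 * b" for s :: real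
  proof -
    define \<alpha> where "\<alpha> = - (of_real s) * cnj c"
    have "0 \<le> Re (qf I A (\<lambda>i. u i + \<alpha> * v i) (\<lambda>i. u i + \<alpha> * v i))"
      by (rule psd_qf[OF assms])
    also have "\<dots> = Re (of_real a + \<alpha> * c + cnj \<alpha> * cnj c + cnj \<alpha> * \<alpha> * of_real b)"
      by (simp add: qf_expand qa qb qvu c_def)
    also have "\<dots> = a - 2 * s * (cmod c)\<^sup>2 + s\<^sup>2 * (cmod c)\<^sup>2 * b"
    proof -
      have cc: "cmod c * cmod c = Re c * Re c + Im c * Im c"
        using cmod_power2[of c] by (simp add: power2_eq_square)
      show ?thesis unfolding \<alpha>_def by (simp add: power2_eq_square algebra_simps cc)
    qed
    finally show ?thesis .
  qed
  show ?thesis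
  proof (cases "b = 0")
    case True
    have "cmod c = 0"
    proof (rule ccontr)
      assume "cmod c \<noteq> 0"
      hence p: "(cmod c)\<^sup>2 > 0" by simp
      have "0 \<le> a - 2 * ((\<bar>a\<bar> + 1) / (2 * (cmod c)\<^sup>2)) * (cmod c)\<^sup>2"
        using key[of "(\<bar>a\<bar> + 1) / (2 * (cmod c)\<^sup>2)"] True by simp
      also have "\<dots> = a - (\<bar>a\<bar> + 1)" using p by (simp add: field_simps)
      finally show False by linarith
    qed
    thus ?thesis using True c_def a_def b_def by simp
  next
    case False
    hence bp: "b > 0" using b0 by simp
    have "0 \<le> a - 2 * (1/b) * (cmod c)\<^sup>2 + (1/b)\<^sup>2 * (cmod c)\<^sup>2 * b" by (rule key)
    also have "\<dots> = a - (cmod c)\<^sup>2 / b" using bp by (simp add: field_simps power2_eq_square)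
    finally have "(cmod c)\<^sup>2 / b \<le> a" by simp
    hence "(cmod c)\<^sup>2 \<le> a * b" using bp by (simp add: field_simps)
    thus ?thesis using c_def a_def b_def by simp
  qed
qed

lemma qf_diff: "qf I (\<lambda>i j. A i j - B i j) u v = qf I A u v - qf I B u v"
  unfolding qf_def by (simp add: algebra_simps sum_subtractf)

lemma qf_id:
  assumes "finite I"
  shows "qf I (\<lambda>i j. if i = j then 1 else 0) u u = of_real (\<Sum>i\<in>I. (cmod (u i))\<^sup>2)"
proof -
  have "qf I (\<lambda>i j. if i = j then 1 else 0) u u = (\<Sum>i\<in>I. cnj (u i) * u i)"
    unfolding qf_def using assms by (simp add: if_distrib if_distribR cong: if_cong)
  also have "\<dots> = (\<Sum>i\<in>I. of_real ((cmod (u i))\<^sup>2))"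
    by (intro sum.cong refl) (metis complex_norm_square mult.commute of_real_power)
  finally show ?thesis by simp
qed

lemma opnorm_from_psd:
  assumes fin: "finite I" and P: "psd_on I P"
    and IP: "psd_on I (\<lambda>i j. (if i = j then 1 else 0) - P i j)"
  shows "opnorm_le1_on I P"
  unfolding opnorm_le1_on_def
proof
  fix v :: "_ \<Rightarrow> complex"
  define w where "w i = (\<Sum>j\<in>I. P i j * v j)" for i
  define nw where "nw = (\<Sum>i\<in>I. (cmod (w i))\<^sup>2)"
  define nv where "nv = (\<Sum>i\<in>I. (cmod (v i))\<^sup>2)"
  have nw0: "0 \<le> nw" unfolding nw_def by (simp add: sum_nonneg)
  have nv0: "0 \<le> nv" unfolding nv_def by (simp add: sum_nonneg)
  have bnd: "Re (qf I P u u) \<le> (\<Sum>i\<in>I. (cmod (u i))\<^sup>2)" for u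
  proof -
    have "0 \<le> Re (qf I (\<lambda>i j. (if i = j then 1 else 0) - P i j) u u)" by (rule psd_qf[OF IP])
    also have "\<dots> = (\<Sum>i\<in>I. (cmod (u i))\<^sup>2) - Re (qf I P u u)"
      by (simp add: qf_diff qf_id[OF fin])
    finally show ?thesis by simp
  qed
  have "qf I P w v = (\<Sum>i\<in>I. cnj (w i) * w i)"
    unfolding qf_def w_def by (simp add: sum_distrib_left mult.assoc)
  also have "\<dots> = of_real nw" unfolding nw_def of_real_sum
    by (intro sum.cong refl) (metis complex_norm_square mult.commute of_real_power)
  finally have e: "qf I P w v = of_real nw" .
  have "nw\<^sup>2 = (cmod (qf I P w v))\<^sup>2" using e nw0 by simp
  also have "\<dots> \<le> Re (qf I P w w) * Re (qf I P v v)" by (rule cs_psd[OF P])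
  also have "\<dots> \<le> nw * nv"
    using bnd[of w] bnd[of v] psd_qf[OF P, of w] psd_qf[OF P, of v] nw_def nv_def
    by (simp add: mult_mono)
  finally have "nw * nw \<le> nw * nv" by (simp add: power2_eq_square)
  hence "nw \<le> nv" using nw0 nv0
    by (cases "nw = 0") (auto simp: mult_le_cancel_left)
  thus "(\<Sum>i\<in>I. (cmod (\<Sum>j\<in>I. P i j * v j))\<^sup>2) \<le> (\<Sum>i\<in>I. (cmod (v i))\<^sup>2)"
    unfolding nw_def nv_def w_def .
qed

definition ind :: "'i \<Rightarrow> 'i \<Rightarrow> complex" where "ind x = (\<lambda>i. if i = x then 1 else 0)"

lemma sum_delta_r:
  fixes f :: "'i \<Rightarrow> complex"
  assumes "finite I" "y \<in> I"
  shows "(\<Sum>j\<in>I. f j * (if j = y then 1 else 0)) = f y"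
proof -
  have "(\<Sum>j\<in>I. f j * (if j = y then 1 else 0)) = (\<Sum>j\<in>I. if j = y then f j else 0)"
    by (intro sum.cong) auto
  thus ?thesis using assms by simp
qed

lemma sum_delta_l:
  fixes f :: "'i \<Rightarrow> complex"
  assumes "finite I" "y \<in> I"
  shows "(\<Sum>j\<in>I. cnj (if j = y then 1 else 0) * f j) = f y"
proof -
  have "(\<Sum>j\<in>I. cnj (if j = y then 1 else 0) * f j) = (\<Sum>j\<in>I. if j = y then f j else 0)"
    by (intro sum.cong) auto
  thus ?thesis using assms by simp
qed

lemma qf_ind: "finite I \<Longrightarrow> x \<in> I \<Longrightarrow> y \<in> I \<Longrightarrow> qf I A (ind x) (ind y) = A x y"
  unfolding qf_def ind_def by (simp add: sum_delta_r sum_delta_l flip: sum_distrib_right)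

lemma qf_ind_right: "finite I \<Longrightarrow> y \<in> I \<Longrightarrow> qf I A v (ind y) = (\<Sum>i\<in>I. cnj (v i) * A i y)"
  unfolding qf_def ind_def by (simp add: sum_delta_r)

lemma gram:
  fixes n :: nat
  shows "psd_on {..<n} A \<Longrightarrow> \<exists>G. \<forall>i<n. \<forall>j<n. A i j = (\<Sum>m<n. G i m * cnj (G j m))"
proof (induction n arbitrary: A)
  case 0
  then show ?case by simp
next
  case (Suc n)
  note psdA = Suc.prems
  have HA: "hermitian_on {..<Suc n} A" using psdA psd_on_def by blast
  define a where "a = Re (A n n)"
  have a0: "0 \<le> a" using psd_qf[OF psdA, of "ind n"] qf_ind[of "{..<Suc n}" n n A] a_def by simp
  have nI: "n \<in> {..<Suc n}" by simp
  have "A n n = cnj (A n n)" using HA nI unfolding hermitian_on_def by blast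
  hence "Im (A n n) = 0" by (simp add: complex_eq_iff)
  hence Ann: "A n n = of_real a" unfolding a_def by (simp add: complex_eq_iff)
  define u where "u i = (if a = 0 then 0 else A i n / of_real (sqrt a))" for i
  define B where "B i j = A i j - u i * cnj (u j)" for i j
  have HB: "hermitian_on {..<Suc n} B"
    unfolding hermitian_on_def
  proof (intro ballI)
    fix i j assume "i \<in> {..<Suc n}" "j \<in> {..<Suc n}"
    hence "A i j = cnj (A j i)" using HA unfolding hermitian_on_def by blast
    thus "B i j = cnj (B j i)" unfolding B_def by simp
  qed
  have psdB: "psd_on {..<Suc n} B"
    unfolding psd_on_def
  proof (intro conjI HB allI)
    fix v :: "nat \<Rightarrow> complex"
    define c where "c = qf {..<Suc n} A v (ind n)"
    have c_eq: "c = (\<Sum>i<Suc n. cnj (v i) * A i n)" unfolding c_def by (simp add: qf_ind_right)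
    have qB: "qf {..<Suc n} B v v = qf {..<Suc n} A v v - (\<Sum>i<Suc n. cnj (v i) * u i) * (\<Sum>j<Suc n. cnj (u j) * v j)"
      unfolding qf_def B_def sum_product by (simp add: algebra_simps sum_subtractf del: sum.lessThan_Suc)
    have "0 \<le> Re (qf {..<Suc n} A v v) - Re ((\<Sum>i<Suc n. cnj (v i) * u i) * (\<Sum>j<Suc n. cnj (u j) * v j))"
    proof (cases "a = 0")
      case True
      then show ?thesis using psd_qf[OF psdA, of v] u_def by simp
    next
      case False
      hence ap: "a > 0" using a0 by simp
      have s1: "(\<Sum>i<Suc n. cnj (v i) * u i) = c / of_real (sqrt a)"
        unfolding c_eq u_def using False by (simp add: sum_divide_distrib del: sum.lessThan_Suc)
      have s2: "(\<Sum>j<Suc n. cnj (u j) * v j) = cnj c / of_real (sqrt a)"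
        unfolding c_eq u_def using False by (simp add: cnj_sum sum_divide_distrib mult.commute del: sum.lessThan_Suc)
      have "(\<Sum>i<Suc n. cnj (v i) * u i) * (\<Sum>j<Suc n. cnj (u j) * v j) = c * cnj c / of_real (sqrt a * sqrt a)"
        unfolding s1 s2 by (simp del: of_real_mult add: of_real_mult[symmetric])
      also have "\<dots> = of_real ((cmod c)\<^sup>2 / a)"
        using ap by (simp add: complex_norm_square[symmetric])
      finally have X: "Re ((\<Sum>i<Suc n. cnj (v i) * u i) * (\<Sum>j<Suc n. cnj (u j) * v j)) = (cmod c)\<^sup>2 / a"
        by simp
      have "(cmod c)\<^sup>2 \<le> Re (qf {..<Suc n} A v v) * a"
        using cs_psd[OF psdA, of v "ind n"] c_def qf_ind[of "{..<Suc n}" n n A] a_def by simp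
      hence "(cmod c)\<^sup>2 / a \<le> Re (qf {..<Suc n} A v v)" using ap by (simp add: divide_le_eq)
      thus ?thesis unfolding X by linarith
    qed
    thus "0 \<le> Re (\<Sum>i<Suc n. \<Sum>j<Suc n. cnj (v i) * B i j * v j)"
      using qB unfolding qf_def by simp
  qed
  have Bnn: "B n n = 0"
  proof (cases "a = 0")
    case True thus ?thesis using Ann u_def B_def by simp
  next
    case False
    hence ap: "a > 0" using a0 by simp
    have "u n = of_real (a / sqrt a)" using False Ann unfolding u_def by simp
    hence "u n * cnj (u n) = of_real (a * a / (sqrt a * sqrt a))" by (simp del: of_real_mult add: of_real_mult[symmetric])
    also have "\<dots> = of_real a" using ap by simp
    finally show ?thesis unfolding B_def using Ann by simp
  qed
  have Bin: "B i n = 0" if "i < Suc n" for i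
  proof -
    have "(cmod (qf {..<Suc n} B (ind i) (ind n)))\<^sup>2 \<le> Re (qf {..<Suc n} B (ind i) (ind i)) * Re (qf {..<Suc n} B (ind n) (ind n))"
      by (rule cs_psd[OF psdB])
    thus ?thesis using that Bnn by (simp add: qf_ind)
  qed
  have Bni: "B n j = 0" if "j < Suc n" for j
  proof -
    have "B n j = cnj (B j n)" using HB that unfolding hermitian_on_def by (meson lessI lessThan_iff)
    thus ?thesis using Bin[OF that] by simp
  qed
  have psdB': "psd_on {..<n} B"
    unfolding psd_on_def
  proof (intro conjI allI)
    show "hermitian_on {..<n} B" using HB unfolding hermitian_on_def by (meson lessThan_iff less_SucI)
    fix v :: "nat \<Rightarrow> complex"
    have "qf {..<Suc n} B v v = qf {..<n} B v v"
      unfolding qf_def using Bin Bni by simp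
    thus "0 \<le> Re (\<Sum>i<n. \<Sum>j<n. cnj (v i) * B i j * v j)"
      using psd_qf[OF psdB, of v] unfolding qf_def by simp
  qed
  obtain G where G: "\<forall>i<n. \<forall>j<n. B i j = (\<Sum>m<n. G i m * cnj (G j m))"
    using Suc.IH[OF psdB'] by blast
  define G' where "G' i m = (if m = n then u i else if i < n then G i m else 0)" for i m
  show ?case
  proof (intro exI allI impI)
    fix i j assume i: "i < Suc n" and j: "j < Suc n"
    have "(\<Sum>m<Suc n. G' i m * cnj (G' j m)) =
          (\<Sum>m<n. (if i < n then G i m else 0) * cnj (if j < n then G j m else 0)) + u i * cnj (u j)"
      unfolding G'_def sum.lessThan_Suc by (intro arg_cong2[where f="(+)"] sum.cong refl) auto
    also have "\<dots> = B i j + u i * cnj (u j)"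
    proof (cases "i < n \<and> j < n")
      case True thus ?thesis using G by simp
    next
      case False
      hence "i = n \<or> j = n" using i j by auto
      thus ?thesis using Bin Bni i j False by auto
    qed
    also have "\<dots> = A i j" unfolding B_def by simp
    finally show "A i j = (\<Sum>m<Suc n. G' i m * cnj (G' j m))" by simp
  qed
qed

lemma tidx_0: "tidx N 0 = {[]}" unfolding tidx_def by auto

lemma tidx_Suc: "tidx N (Suc k) = (\<lambda>(m, ms). m # ms) ` ({..<N} \<times> tidx N k)"
proof
  show "tidx N (Suc k) \<subseteq> (\<lambda>(m, ms). m # ms) ` ({..<N} \<times> tidx N k)"
  proof
    fix xs assume "xs \<in> tidx N (Suc k)"
    then obtain m ms where xs: "xs = m # ms" "length ms = k" "set xs \<subseteq> {..<N}"
      unfolding tidx_def by (auto simp: length_Suc_conv)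
    thus "xs \<in> (\<lambda>(m, ms). m # ms) ` ({..<N} \<times> tidx N k)"
      unfolding tidx_def by force
  qed
  show "(\<lambda>(m, ms). m # ms) ` ({..<N} \<times> tidx N k) \<subseteq> tidx N (Suc k)"
    unfolding tidx_def by auto
qed

lemma finite_tidx: "finite (tidx N k)"
  by (induction k) (simp_all add: tidx_0 tidx_Suc)

lemma tidx_nth: "xs \<in> tidx N k \<Longrightarrow> l < k \<Longrightarrow> xs ! l < N"
  unfolding tidx_def using nth_mem by fastforce

lemma prod_sum_tidx:
  fixes f :: "nat \<Rightarrow> nat \<Rightarrow> 'a::comm_semiring_1"
  shows "(\<Prod>l<k. \<Sum>m<N. f l m) = (\<Sum>ms\<in>tidx N k. \<Prod>l<k. f l (ms ! l))"
proof (induction k arbitrary: f)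
  case 0
  then show ?case by (simp add: tidx_0)
next
  case (Suc k)
  have inj: "inj_on (\<lambda>(m, ms). m # ms) ({..<N} \<times> tidx N k)"
    by (auto simp: inj_on_def)
  have "(\<Sum>ms\<in>tidx N (Suc k). \<Prod>l<Suc k. f l (ms ! l))
      = (\<Sum>(m, ms)\<in>{..<N} \<times> tidx N k. \<Prod>l<Suc k. f l ((m # ms) ! l))"
    unfolding tidx_Suc by (subst sum.reindex[OF inj]) (simp add: case_prod_unfold)
  also have "\<dots> = (\<Sum>m<N. \<Sum>ms\<in>tidx N k. f 0 m * (\<Prod>l<k. f (Suc l) (ms ! l)))"
    by (subst sum.cartesian_product[symmetric]) (simp del: prod.lessThan_Suc add: prod.lessThan_Suc_shift)
  also have "\<dots> = (\<Sum>m<N. f 0 m) * (\<Sum>ms\<in>tidx N k. \<Prod>l<k. f (Suc l) (ms ! l))"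
    by (rule sum_product[symmetric])
  also have "\<dots> = (\<Sum>m<N. f 0 m) * (\<Prod>l<k. \<Sum>m<N. f (Suc l) m)"
    using Suc.IH[of "\<lambda>l. f (Suc l)"] by simp
  also have "\<dots> = (\<Prod>l<Suc k. \<Sum>m<N. f l m)"
    by (simp only: prod.lessThan_Suc_shift)
  finally show ?case by simp
qed

lemma qtrace_re_nonneg:
  assumes rho: "\<rho> \<in> density_states N" and M: "psd_on (tidx N k) M"
  shows "0 \<le> Re (qtrace N k \<rho> M)"
proof -
  obtain G where G: "\<forall>i<N. \<forall>j<N. \<rho> i j = (\<Sum>m<N. G i m * cnj (G j m))"
    using gram[of N \<rho>] rho unfolding density_states_def by blast
  define g where "g ms xs = (\<Prod>l<k. G (xs ! l) (ms ! l))" for ms xs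
  have tp: "tensor_pow \<rho> k xs ys = (\<Sum>ms\<in>tidx N k. g ms xs * cnj (g ms ys))"
    if xs: "xs \<in> tidx N k" and ys: "ys \<in> tidx N k" for xs ys
  proof -
    have "tensor_pow \<rho> k xs ys = (\<Prod>l<k. \<Sum>m<N. G (xs ! l) m * cnj (G (ys ! l) m))"
      unfolding tensor_pow_def using G tidx_nth[OF xs] tidx_nth[OF ys]
      by (intro prod.cong refl) simp
    also have "\<dots> = (\<Sum>ms\<in>tidx N k. \<Prod>l<k. G (xs ! l) (ms ! l) * cnj (G (ys ! l) (ms ! l)))"
      by (rule prod_sum_tidx)
    also have "\<dots> = (\<Sum>ms\<in>tidx N k. g ms xs * cnj (g ms ys))"
      unfolding g_def by (simp add: prod.distrib cnj_prod)
    finally show ?thesis .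
  qed
  have "qtrace N k \<rho> M = (\<Sum>xs\<in>tidx N k. \<Sum>ys\<in>tidx N k. \<Sum>ms\<in>tidx N k. g ms xs * cnj (g ms ys) * M ys xs)"
    unfolding qtrace_def using tp by (simp add: sum_distrib_right)
  also have "\<dots> = (\<Sum>ms\<in>tidx N k. qf (tidx N k) M (g ms) (g ms))"
  proof -
    let ?F = "\<lambda>xs ys ms. g ms xs * cnj (g ms ys) * M ys xs"
    have "(\<Sum>xs\<in>tidx N k. \<Sum>ys\<in>tidx N k. \<Sum>ms\<in>tidx N k. ?F xs ys ms)
        = (\<Sum>xs\<in>tidx N k. \<Sum>ms\<in>tidx N k. \<Sum>ys\<in>tidx N k. ?F xs ys ms)"
      by (rule sum.cong[OF refl], rule sum.swap)
    also have "\<dots> = (\<Sum>ms\<in>tidx N k. \<Sum>xs\<in>tidx N k. \<Sum>ys\<in>tidx N k. ?F xs ys ms)"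
      by (rule sum.swap)
    also have "\<dots> = (\<Sum>ms\<in>tidx N k. \<Sum>ys\<in>tidx N k. \<Sum>xs\<in>tidx N k. ?F xs ys ms)"
      by (rule sum.cong[OF refl], rule sum.swap)
    also have "\<dots> = (\<Sum>ms\<in>tidx N k. qf (tidx N k) M (g ms) (g ms))"
      unfolding qf_def by (simp add: mult_ac)
    finally show ?thesis .
  qed
  finally have "Re (qtrace N k \<rho> M) = (\<Sum>ms\<in>tidx N k. Re (qf (tidx N k) M (g ms) (g ms)))"
    by simp
  also have "\<dots> \<ge> 0" by (intro sum_nonneg psd_qf[OF M])
  finally show ?thesis by simp
qed

lemma qtrace_sum:
  "(\<Sum>t\<in>S. qtrace N k \<rho> (M t)) = qtrace N k \<rho> (\<lambda>xs ys. \<Sum>t\<in>S. M t xs ys)"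
  unfolding qtrace_def by (simp add: sum_distrib_left sum.swap[of _ S])

lemma qtrace_id:
  assumes rho: "\<rho> \<in> density_states N"
    and Ob: "\<forall>xs\<in>tidx N k. \<forall>ys\<in>tidx N k. Ob xs ys = (if xs = ys then 1 else 0)"
  shows "qtrace N k \<rho> Ob = 1"
proof -
  have "qtrace N k \<rho> Ob = (\<Sum>xs\<in>tidx N k. tensor_pow \<rho> k xs xs)"
    unfolding qtrace_def
  proof (intro sum.cong refl)
    fix xs assume xs: "xs \<in> tidx N k"
    have "(\<Sum>ys\<in>tidx N k. tensor_pow \<rho> k xs ys * Ob ys xs) = (\<Sum>ys\<in>tidx N k. if ys = xs then tensor_pow \<rho> k xs ys else 0)"
      using Ob xs by (intro sum.cong refl) auto
    also have "\<dots> = tensor_pow \<rho> k xs xs" using xs finite_tidx by simp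
    finally show "(\<Sum>ys\<in>tidx N k. tensor_pow \<rho> k xs ys * Ob ys xs) = tensor_pow \<rho> k xs xs" .
  qed
  also have "\<dots> = (\<Prod>l<k. \<Sum>m<N. \<rho> m m)"
    unfolding tensor_pow_def by (rule prod_sum_tidx[symmetric])
  also have "\<dots> = 1" using rho unfolding density_states_def by simp
  finally show ?thesis .
qed

lemma qf_sum: "qf I (\<lambda>x y. \<Sum>t\<in>S. M t x y) u v = (\<Sum>t\<in>S. qf I (M t) u v)"
  unfolding qf_def by (simp add: sum_distrib_left sum_distrib_right sum.swap[of _ S])

lemma psd_sum:
  assumes "\<forall>t\<in>S. psd_on I (M t)"
  shows "psd_on I (\<lambda>x y. \<Sum>t\<in>S. M t x y)"
  unfolding psd_on_def
proof (intro conjI allI)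
  show "hermitian_on I (\<lambda>x y. \<Sum>t\<in>S. M t x y)"
    unfolding hermitian_on_def
  proof (intro ballI)
    fix i j assume ij: "i \<in> I" "j \<in> I"
    have "\<forall>t\<in>S. M t i j = cnj (M t j i)" using assms ij unfolding psd_on_def hermitian_on_def by blast
    hence "(\<Sum>t\<in>S. M t i j) = (\<Sum>t\<in>S. cnj (M t j i))" by (metis (no_types, lifting) sum.cong)
    thus "(\<Sum>t\<in>S. M t i j) = cnj (\<Sum>t\<in>S. M t j i)" by (simp add: cnj_sum)
  qed
  fix v :: "_ \<Rightarrow> complex"
  have "Re (qf I (\<lambda>x y. \<Sum>t\<in>S. M t x y) v v) = (\<Sum>t\<in>S. Re (qf I (M t) v v))"
    by (simp add: qf_sum)
  also have "\<dots> \<ge> 0" using assms psd_qf by (intro sum_nonneg) blast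
  finally show "0 \<le> Re (\<Sum>i\<in>I. \<Sum>j\<in>I. cnj (v i) * (\<Sum>t\<in>S. M t i j) * v j)"
    unfolding qf_def by simp
qed

lemma psd_cong:
  assumes "\<forall>x\<in>I. \<forall>y\<in>I. A x y = B x y" and "psd_on I A"
  shows "psd_on I B"
proof -
  have h: "hermitian_on I B" unfolding hermitian_on_def
  proof (intro ballI)
    fix x y assume xy: "x \<in> I" "y \<in> I"
    have "A x y = cnj (A y x)" using assms(2) xy unfolding psd_on_def hermitian_on_def by blast
    thus "B x y = cnj (B y x)" using assms(1) xy by simp
  qed
  have "qf I B v v = qf I A v v" for v unfolding qf_def using assms(1) by simp
  thus ?thesis using h assms(2) unfolding psd_on_def qf_def by simp
qed

primrec build :: "nat \<Rightarrow> (nat \<Rightarrow> kop) \<Rightarrow> (nat \<Rightarrow> 't) \<Rightarrow> nat \<Rightarrow> nat \<Rightarrow> 't sq_alg" where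
  "build 0 Os out j acc = Output (out acc)"
| "build (Suc r) Os out j acc =
     Ask (Os j) (\<lambda>v. build r Os out (Suc j) (if v > 1/2 then acc + 2^j else acc))"

lemma build_ok:
  assumes obs: "\<forall>j<q. qstat_obs N k (Os j)"
    and dec: "\<forall>j<q. \<forall>v. cmod (complex_of_real v - qtrace N k \<rho> (Os j)) \<le> \<tau> \<longrightarrow>
                 (v > 1/2 \<longleftrightarrow> odd (iz div 2^j))"
    and out: "out iz \<in> T" and iz: "iz < 2^q"
  shows "sq_ok N k \<tau> \<rho> T (build q Os out 0 0) q"
proof -
  have "\<forall>j acc. j + r = q \<longrightarrow> acc = iz mod 2^j \<longrightarrow> sq_ok N k \<tau> \<rho> T (build r Os out j acc) r" for r
  proof (induction r)
    case 0
    then show ?case using out iz by simp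
  next
    case (Suc r)
    show ?case
    proof (intro allI impI)
      fix j acc assume jr: "j + Suc r = q" and acc: "acc = iz mod 2^j"
      have jq: "j < q" using jr by simp
      have step: "sq_ok N k \<tau> \<rho> T (build r Os out (Suc j) (if v > 1/2 then acc + 2^j else acc)) r"
        if v: "cmod (complex_of_real v - qtrace N k \<rho> (Os j)) \<le> \<tau>" for v
      proof -
        have e: "(v > 1/2) = odd (iz div 2^j)" using dec jq v by blast
        have m2: "iz mod 2^(Suc j) = 2^j * (iz div 2^j mod 2) + iz mod 2^j"
          using mod_mult2_eq[of iz "2^j" 2] by (simp add: mult.commute)
        have "(if v > 1/2 then acc + 2^j else acc) = iz mod 2^(Suc j)"
          unfolding m2 acc e by (auto simp: odd_iff_mod_2_eq_one even_iff_mod_2_eq_zero)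
        moreover have "sq_ok N k \<tau> \<rho> T (build r Os out (Suc j) (iz mod 2^(Suc j))) r"
          using Suc.IH jr by (metis add_Suc add_Suc_right)
        ultimately show ?thesis by simp
      qed
      show "sq_ok N k \<tau> \<rho> T (build (Suc r) Os out j acc) (Suc r)"
        using obs jq step by simp
    qed
  qed
  from this[of q] show ?thesis by simp
qed

lemma card_le_pow_log:
  assumes "1 \<le> m"
  shows "m \<le> 2 ^ (nat \<lceil>log 2 (real m)\<rceil>)"
proof -
  have l0: "0 \<le> log 2 (real m)" using assms by simp
  have "real m = 2 powr (log 2 (real m))" using assms by simp
  also have "\<dots> \<le> 2 powr (real (nat \<lceil>log 2 (real m)\<rceil>))"
    using l0 by (intro powr_mono) (linarith, simp)
  also have "\<dots> = real (2 ^ (nat \<lceil>log 2 (real m)\<rceil>))" by (simp add: powr_realpow)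
  finally show ?thesis by linarith
qed

lemma first_part:
  fixes N k :: nat and \<delta> :: real and Q :: "cmat set" and Z :: "cmat \<Rightarrow> 't set"
  assumes d0: "0 \<le> \<delta>" and d1: "\<delta> < 1/2"
    and QS: "Q \<subseteq> density_states N"
    and disj: "\<forall>A\<in>Z ` Q. \<forall>B\<in>Z ` Q. A \<noteq> B \<longrightarrow> A \<inter> B = {}"
    and QL: "quantum_learns N k \<delta> Q Z" and tau: "\<tau> < 1/2 - \<delta>"
  shows "sq_learns N k \<tau> Q Z (nat \<lceil>log 2 (real (card (Z ` Q)))\<rceil>)"
proof -
  obtain S :: "'t set" and M where fS: "finite S" and Mpsd: "\<forall>t\<in>S. psd_on (tidx N k) (M t)"
    and Mid: "\<forall>xs\<in>tidx N k. \<forall>ys\<in>tidx N k. (\<Sum>t\<in>S. M t xs ys) = (if xs = ys then 1 else 0)"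
    and succ: "\<forall>\<rho>\<in>Q. (\<Sum>t\<in>S \<inter> Z \<rho>. Re (qtrace N k \<rho> (M t))) \<ge> 1 - \<delta>"
    using QL unfolding quantum_learns_def by blast
  define \<Z> where "\<Z> = Z ` Q"
  define q where "q = nat \<lceil>log 2 (real (card \<Z>))\<rceil>"
  have nonneg: "0 \<le> Re (qtrace N k \<rho> (M t))" if "\<rho> \<in> Q" "t \<in> S" for \<rho> t
    using qtrace_re_nonneg[of \<rho> N k "M t"] QS Mpsd that by blast
  have tot: "(\<Sum>t\<in>S. Re (qtrace N k \<rho> (M t))) = 1" if "\<rho> \<in> Q" for \<rho>
  proof -
    have "(\<Sum>t\<in>S. qtrace N k \<rho> (M t)) = 1"
      unfolding qtrace_sum using QS that Mid by (intro qtrace_id) auto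
    hence "Re (\<Sum>t\<in>S. qtrace N k \<rho> (M t)) = 1" by simp
    thus ?thesis by simp
  qed
  have ne: "S \<inter> Z \<rho> \<noteq> {}" if "\<rho> \<in> Q" for \<rho>
  proof
    assume "S \<inter> Z \<rho> = {}"
    thus False using succ that d1 by fastforce
  qed
  define pick where "pick T = (SOME t. t \<in> S \<inter> T)" for T :: "'t set"
  have pick: "pick T \<in> S \<inter> T" if T: "T \<in> \<Z>" for T
  proof -
    obtain \<rho> where "\<rho> \<in> Q" "T = Z \<rho>" using T unfolding \<Z>_def by blast
    hence "\<exists>t. t \<in> S \<inter> T" using ne by blast
    thus ?thesis unfolding pick_def by (rule someI_ex)
  qed
  have "inj_on pick \<Z>"
  proof (rule inj_onI)
    fix A B assume A: "A \<in> \<Z>" and B: "B \<in> \<Z>" and e: "pick A = pick B"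
    have "pick A \<in> A \<inter> B" using pick[OF A] pick[OF B] e by auto
    thus "A = B" using disj A B unfolding \<Z>_def by blast
  qed
  moreover have "pick ` \<Z> \<subseteq> S" using pick by blast
  ultimately have finZ: "finite \<Z>" using fS finite_imageD finite_subset by metis
  obtain idx where bij: "bij_betw idx \<Z> {0..<card \<Z>}"
    using ex_bij_betw_finite_nat[OF finZ] by blast
  define c where "c t = idx (THE T. T \<in> \<Z> \<and> t \<in> T)" for t
  have cval: "c t = idx (Z \<rho>)" if "\<rho> \<in> Q" "t \<in> Z \<rho>" for \<rho> t
  proof -
    have "(THE T. T \<in> \<Z> \<and> t \<in> T) = Z \<rho>"
    proof (rule the_equality)
      show "Z \<rho> \<in> \<Z> \<and> t \<in> Z \<rho>" using that unfolding \<Z>_def by blast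
      fix T assume "T \<in> \<Z> \<and> t \<in> T"
      thus "T = Z \<rho>" using disj that unfolding \<Z>_def by blast
    qed
    thus ?thesis unfolding c_def by simp
  qed
  define Sj where "Sj j = {t \<in> S. odd (c t div 2^j)}" for j
  define Os where "Os j = (\<lambda>xs ys. \<Sum>t\<in>Sj j. M t xs ys)" for j
  define out where "out i = (SOME t. t \<in> inv_into \<Z> idx i)" for i
  have fSj: "finite (Sj j)" for j using fS unfolding Sj_def by simp
  have subSj: "Sj j \<subseteq> S" for j unfolding Sj_def by blast
  have obs: "qstat_obs N k (Os j)" for j
  proof -
    have P: "psd_on (tidx N k) (Os j)" unfolding Os_def
      by (rule psd_sum) (use Mpsd in \<open>unfold Sj_def, blast\<close>)
    have R: "psd_on (tidx N k) (\<lambda>xs ys. \<Sum>t\<in>S - Sj j. M t xs ys)"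
      by (rule psd_sum) (use Mpsd in blast)
    have "psd_on (tidx N k) (\<lambda>xs ys. (if xs = ys then 1 else 0) - Os j xs ys)"
    proof (rule psd_cong[OF _ R], intro ballI)
      fix xs ys assume "xs \<in> tidx N k" "ys \<in> tidx N k"
      hence "(if xs = ys then 1 else 0) = (\<Sum>t\<in>S. M t xs ys)" using Mid by simp
      also have "\<dots> = (\<Sum>t\<in>Sj j. M t xs ys) + (\<Sum>t\<in>S - Sj j. M t xs ys)"
        using sum.subset_diff[OF subSj fS, of "\<lambda>t. M t xs ys"] by (simp add: add.commute)
      finally show "(\<Sum>t\<in>S - Sj j. M t xs ys) = (if xs = ys then 1 else 0) - Os j xs ys"
        unfolding Os_def by simp
    qed
    hence "opnorm_le1_on (tidx N k) (Os j)" by (rule opnorm_from_psd[OF finite_tidx P])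
    moreover have "hermitian_on (tidx N k) (Os j)" using P unfolding psd_on_def by blast
    ultimately show ?thesis unfolding qstat_obs_def by blast
  qed
  define A where "A = build q Os out 0 0"
  have "sq_ok N k \<tau> \<rho> (Z \<rho>) A q" if \<rho>: "\<rho> \<in> Q" for \<rho>
  proof -
    define i0 where "i0 = idx (Z \<rho>)"
    have ZZ: "Z \<rho> \<in> \<Z>" using \<rho> unfolding \<Z>_def by blast
    have i0m: "i0 < card \<Z>" using bij_betw_apply[OF bij ZZ] unfolding i0_def by simp
    have "card \<Z> \<le> 2 ^ q" unfolding q_def using card_le_pow_log[of "card \<Z>"] i0m by simp
    hence i0q: "i0 < 2 ^ q" using i0m by simp
    have "inv_into \<Z> idx i0 = Z \<rho>"
      unfolding i0_def using bij ZZ by (metis bij_betw_def inv_into_f_f)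
    moreover have "\<exists>t. t \<in> Z \<rho>" using ne[OF \<rho>] by blast
    ultimately have outi: "out i0 \<in> Z \<rho>" unfolding out_def by (metis someI_ex)
    have pj: "Re (qtrace N k \<rho> (Os j)) = (\<Sum>t\<in>Sj j. Re (qtrace N k \<rho> (M t)))" for j
      unfolding Os_def qtrace_sum[symmetric] by simp
    have dec: "(v > 1/2) = odd (i0 div 2^j)"
      if v: "cmod (complex_of_real v - qtrace N k \<rho> (Os j)) \<le> \<tau>" for v j
    proof -
      have "\<bar>Re (complex_of_real v - qtrace N k \<rho> (Os j))\<bar> \<le> \<tau>"
        using abs_Re_le_cmod v by (meson order_trans)
      hence vb: "\<bar>v - (\<Sum>t\<in>Sj j. Re (qtrace N k \<rho> (M t)))\<bar> \<le> \<tau>" using pj by simp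
      have split: "(\<Sum>t\<in>S. Re (qtrace N k \<rho> (M t))) =
          (\<Sum>t\<in>S \<inter> Z \<rho>. Re (qtrace N k \<rho> (M t))) + (\<Sum>t\<in>S - Z \<rho>. Re (qtrace N k \<rho> (M t)))"
        using fS by (rule sum.Int_Diff)
      show ?thesis
      proof (cases "odd (i0 div 2^j)")
        case True
        have sub: "S \<inter> Z \<rho> \<subseteq> Sj j" using cval[OF \<rho>] True unfolding Sj_def i0_def by auto
        have "(\<Sum>t\<in>S \<inter> Z \<rho>. Re (qtrace N k \<rho> (M t))) \<le> (\<Sum>t\<in>Sj j. Re (qtrace N k \<rho> (M t)))"
          by (rule sum_mono2[OF fSj sub]) (use nonneg[OF \<rho>] Sj_def in auto)
        hence "1 - \<delta> \<le> (\<Sum>t\<in>Sj j. Re (qtrace N k \<rho> (M t)))" using succ \<rho> by fastforce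
        thus ?thesis using True vb tau by linarith
      next
        case False
        have sub: "Sj j \<subseteq> S - Z \<rho>" using cval[OF \<rho>] False unfolding Sj_def i0_def by auto
        have "(\<Sum>t\<in>Sj j. Re (qtrace N k \<rho> (M t))) \<le> (\<Sum>t\<in>S - Z \<rho>. Re (qtrace N k \<rho> (M t)))"
          by (rule sum_mono2[OF _ sub]) (use nonneg[OF \<rho>] fS in auto)
        moreover have "(\<Sum>t\<in>S - Z \<rho>. Re (qtrace N k \<rho> (M t))) \<le> \<delta>"
          using split tot[OF \<rho>] succ \<rho> by fastforce
        ultimately show ?thesis using False vb tau by linarith
      qed
    qed
    show ?thesis unfolding A_def
    proof (rule build_ok[where iz = i0 and out = out and T = "Z \<rho>" and q = q, OF _ _ outi i0q])
      show "\<forall>j<q. qstat_obs N k (Os j)" using obs by blast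
      show "\<forall>j<q. \<forall>v. cmod (complex_of_real v - qtrace N k \<rho> (Os j)) \<le> \<tau> \<longrightarrow>
                 (v > 1/2 \<longleftrightarrow> odd (i0 div 2^j))" using dec by blast
    qed
  qed
  thus ?thesis unfolding sq_learns_def q_def \<Z>_def by blast
qed

theorem mainTheorem10:
  fixes N k :: nat and \<delta> :: real and Q :: "cmat set" and Z :: "cmat \<Rightarrow> 't set"
  assumes "0 \<le> \<delta>" and "\<delta> < 1/2"
    and "Q \<subseteq> density_states N"
    and "\<forall>A\<in>Z ` Q. \<forall>B\<in>Z ` Q. A \<noteq> B \<longrightarrow> A \<inter> B = {}"
  shows "(quantum_learns N k \<delta> Q Z \<longrightarrow>
            (\<forall>\<tau>. \<tau> < 1/2 - \<delta> \<longrightarrow>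
               sq_learns N k \<tau> Q Z (nat \<lceil>log 2 (real (card (Z ` Q)))\<rceil>)))
       \<and> (\<delta> \<le> 1/3 \<and> \<not> sq_learns N k (1/10) Q Z (nat \<lceil>log 2 (real (card (Z ` Q)))\<rceil>)
            \<longrightarrow> \<not> quantum_learns N k \<delta> Q Z)"
proof (intro conjI impI allI)
  fix \<tau> :: real
  assume "quantum_learns N k \<delta> Q Z" "\<tau> < 1/2 - \<delta>"
  thus "sq_learns N k \<tau> Q Z (nat \<lceil>log 2 (real (card (Z ` Q)))\<rceil>)"
    using first_part assms by blast
next
  assume h: "\<delta> \<le> 1/3 \<and> \<not> sq_learns N k (1/10) Q Z (nat \<lceil>log 2 (real (card (Z ` Q)))\<rceil>)"
  show "\<not> quantum_learns N k \<delta> Q Z"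
  proof
    assume "quantum_learns N k \<delta> Q Z"
    moreover have "(1/10::real) < 1/2 - \<delta>" using h by simp
    ultimately show False using first_part[OF assms] h by blast
  qed
qed

end
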